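(* Let $p,q\ge0$, $m=p+q$, and let $\boldsymbol x=(x_1,\dots,x_m)$, $\boldsymbol a=(a_1,\dots,a_m)$ be indeterminates. Then $$F^{p,q}(\boldsymbol x;\boldsymbol a)=(-1)^{\binom p2+\binom q2}\prod_{i=1}^m x_i^{p-1}\cdot\det V^{p,q}(\boldsymbol x+\boldsymbol x^{-1};\boldsymbol a\boldsymbol x^{q-p})=(-1)^{\binom p2+\binom q2}\det U,$$ where $\boldsymbol x+\boldsymbol x^{-1}=(x_1+x_1^{-1},\dots,x_m+x_m^{-1})$, $\boldsymbol a\boldsymbol x^{q-p}=(a_1x_1^{q-p},\dots,a_mx_m^{q-p})$, and $U$ is the $m\times m$ matrix whose $i$-th row is $$\big(x_i^{p-1},\,x_i^{p-2}(1+x_i^2),\,\dots,\,(1+x_i^2)^{p-1},\ a_ix_i^{q-1},\,a_ix_i^{q-2}(1+x_i^2),\,\dots,\,a_i(1+x_i^2)^{q-1}\big).$$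
   Context: Partitions: a partition $\lambda=(\lambda_1\ge\lambda_2\ge\cdots)$ of nonnegative integers with finitely many nonzero parts; $l(\lambda)$ is the number of nonzero parts, $|\lambda|=\sum_i\lambda_i$. In Frobenius notation $\lambda=(\alpha_1,\dots,\alpha_d\,|\,\beta_1,\dots,\beta_d)$ where $d=\#\{i:\lambda_i\ge i\}$, $\alpha_i=\lambda_i-i$, $\beta_i=\lambda'_i-i$ ($\lambda'$ the conjugate partition). For an integer $m\ge 0$, $\mathcal{P}_m$ is the set of partitions $\lambda$ with $l(\lambda)\le m$ of the form $(\alpha_1,\dots,\alpha_d\,|\,\alpha_1+1,\dots,\alpha_d+1)$ (the empty partition included; $|\lambda|$ is then even). For nonnegative integers $p,q$, vectors $\boldsymbol{x}=(x_1,\dots,x_{p+q})$, $\boldsymbol{a}=(a_1,\dots,a_{p+q})$, and partitions $\lambda,\mu$ with $l(\lambda)\le p$, $l(\mu)\le q$, let $V^{p,q}_{\lambda,\mu}(\boldsymbol{x};\boldsymbol{a})$ be the $(p+q)\times(p+q)$ matrix whose $i$-th row is $$(x_i^{\lambda_p},x_i^{\lambda_{p-1}+1},\dots,x_i^{\lambda_1+p-1},\ a_ix_i^{\mu_q},a_ix_i^{\mu_{q-1}+1},\dots,a_ix_i^{\mu_1+q-1}),$$ and $V^{p,q}(\boldsymbol x;\boldsymbol a)=V^{p,q}_{\emptyset,\emptyset}(\boldsymbol x;\boldsymbol a)$, i.e. the matrix with $i$-th row $(1,x_i,\dots,x_i^{p-1},a_i,a_ix_i,\dots,a_ix_i^{q-1})$.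 Define $$F^{p,q}(\boldsymbol{x};\boldsymbol{a})=\sum_{\lambda\in\mathcal{P}_p,\ \mu\in\mathcal{P}_q}(-1)^{(|\lambda|+|\mu|)/2}\det V^{p,q}_{\lambda,\mu}(\boldsymbol{x};\boldsymbol{a}).$$ *)

theory Defs
  imports Complex_Main "Jordan_Normal_Form.Determinant"
begin

(* Partitions are represented as functions lam :: nat => nat, 1-indexed:
   lam 1 >= lam 2 >= ... , lam 0 = 0 (unused), finitely many nonzero parts. *)
definition is_partition :: "(nat \<Rightarrow> nat) \<Rightarrow> bool" where
  "is_partition lam \<longleftrightarrow> lam 0 = 0 \<and> (\<forall>i\<ge>1. lam (Suc i) \<le> lam i)
      \<and> finite {i. lam i \<noteq> 0}"

definition part_len :: "(nat \<Rightarrow> nat) \<Rightarrow> nat" where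
  "part_len lam = card {i. 1 \<le> i \<and> lam i \<noteq> 0}"

definition part_size :: "(nat \<Rightarrow> nat) \<Rightarrow> nat" where
  "part_size lam = (\<Sum>i\<in>{i. 1 \<le> i \<and> lam i \<noteq> 0}. lam i)"

definition part_conj :: "(nat \<Rightarrow> nat) \<Rightarrow> nat \<Rightarrow> nat" where
  "part_conj lam j = (if j = 0 then 0 else card {i. 1 \<le> i \<and> j \<le> lam i})"

definition durfee :: "(nat \<Rightarrow> nat) \<Rightarrow> nat" where
  "durfee lam = card {i. 1 \<le> i \<and> i \<le> lam i}"

definition frob_alpha :: "(nat \<Rightarrow> nat) \<Rightarrow> nat \<Rightarrow> int" where
  "frob_alpha lam i = int (lam i) - int i"

definition frob_beta :: "(nat \<Rightarrow> nat) \<Rightarrow> nat \<Rightarrow> int" where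
  "frob_beta lam i = int (part_conj lam i) - int i"

definition Pset :: "nat \<Rightarrow> (nat \<Rightarrow> nat) set" where
  "Pset m = {lam. is_partition lam \<and> part_len lam \<le> m \<and>
       (\<forall>i\<in>{1..durfee lam}. frob_beta lam i = frob_alpha lam i + 1)}"

(* V^{p,q}_{lambda,mu}(x;a), rows/columns 0-indexed; row i uses x i, a i *)
definition Vmat :: "nat \<Rightarrow> nat \<Rightarrow> (nat \<Rightarrow> nat) \<Rightarrow> (nat \<Rightarrow> nat)
    \<Rightarrow> (nat \<Rightarrow> 'a::comm_ring_1) \<Rightarrow> (nat \<Rightarrow> 'a) \<Rightarrow> 'a mat" where
  "Vmat p q lam mu x a = mat (p + q) (p + q) (\<lambda>(i, j).
      if j < p then x i ^ (lam (p - j) + j)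
      else a i * x i ^ (mu (q - (j - p)) + (j - p)))"

definition V0mat :: "nat \<Rightarrow> nat \<Rightarrow> (nat \<Rightarrow> 'a::comm_ring_1) \<Rightarrow> (nat \<Rightarrow> 'a) \<Rightarrow> 'a mat" where
  "V0mat p q x a = Vmat p q (\<lambda>_. 0) (\<lambda>_. 0) x a"

definition Ffun :: "nat \<Rightarrow> nat \<Rightarrow> (nat \<Rightarrow> 'a::comm_ring_1) \<Rightarrow> (nat \<Rightarrow> 'a) \<Rightarrow> 'a" where
  "Ffun p q x a = (\<Sum>lam\<in>Pset p. \<Sum>mu\<in>Pset q.
      (-1) ^ ((part_size lam + part_size mu) div 2) * det (Vmat p q lam mu x a))"

definition Umat :: "nat \<Rightarrow> nat \<Rightarrow> (nat \<Rightarrow> 'a::comm_ring_1) \<Rightarrow> (nat \<Rightarrow> 'a) \<Rightarrow> 'a mat" where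
  "Umat p q x a = mat (p + q) (p + q) (\<lambda>(i, j).
      if j < p then x i ^ (p - 1 - j) * (1 + x i ^ 2) ^ j
      else a i * x i ^ (q - 1 - (j - p)) * (1 + x i ^ 2) ^ (j - p))"

end

theory Submission
  imports Defs
begin

definition Qc :: "(nat \<Rightarrow> nat) \<Rightarrow> bool" where
  "Qc lam \<longleftrightarrow> (\<forall>i j. 1 \<le> i \<longrightarrow> i \<le> j \<longrightarrow> (j \<le> lam i \<longleftrightarrow> i \<le> lam (Suc j)))"

lemma part_mono: assumes "is_partition lam" "1 \<le> i" "i \<le> j" shows "lam j \<le> lam i"
  using assms(3,2)
proof (induction j rule: dec_induct)
  case base then show ?case by simp
next
  case (step j) then show ?case using assms(1) unfolding is_partition_def
    by (metis le_trans)
qed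

lemma downclosed_interval:
  assumes "finite B" "\<forall>k\<in>B. 1 \<le> k" "\<forall>k\<in>B. \<forall>k'. 1 \<le> k' \<longrightarrow> k' \<le> k \<longrightarrow> k' \<in> B"
  shows "B = {1..card B}"
proof (cases "B = {}")
  case True then show ?thesis by simp
next
  case False
  define M where "M = Max B"
  have M: "M \<in> B" "\<forall>k\<in>B. k \<le> M" using False assms(1) M_def by auto
  have "B = {1..M}"
  proof
    show "B \<subseteq> {1..M}" using M(2) assms(2) by auto
    show "{1..M} \<subseteq> B"
    proof
      fix k assume "k \<in> {1..M}"
      then show "k \<in> B" using assms(3) M(1) by simp
    qed
  qed
  then show ?thesis by simp
qed

lemma downclosed_iff:
  assumes "finite {k. P k}" "\<And>k. P k \<Longrightarrow> 1 \<le> k" "\<And>k k'. P k \<Longrightarrow> 1 \<le> k' \<Longrightarrow> k' \<le> k \<Longrightarrow> P k'"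
  shows "P k \<longleftrightarrow> 1 \<le> k \<and> k \<le> card {k. P k}"
proof -
  have "{k. P k} = {1..card {k. P k}}"
  proof (rule downclosed_interval)
    show "finite {k. P k}" by (rule assms(1))
    show "\<forall>k\<in>{k. P k}. 1 \<le> k" using assms(2) by blast
    show "\<forall>k\<in>{k. P k}. \<forall>k'. 1 \<le> k' \<longrightarrow> k' \<le> k \<longrightarrow> k' \<in> {k. P k}"
    proof (intro ballI allI impI)
      fix k k' assume "k \<in> {k. P k}" "1 \<le> k'" "k' \<le> k"
      then show "k' \<in> {k. P k}" using assms(3)[of k k'] by simp
    qed
  qed
  then have "k \<in> {k. P k} \<longleftrightarrow> k \<in> {1..card {k. P k}}" by (rule arg_cong)
  then show ?thesis by simp
qed

lemma part_len_le: assumes "is_partition lam"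
  shows "part_len lam \<le> p \<longleftrightarrow> (\<forall>k>p. lam k = 0)"
proof -
  have "finite {i. lam i \<noteq> 0}" using assms(1) by (simp add: is_partition_def)
  then have fin: "finite {i. 1 \<le> i \<and> lam i \<noteq> 0}" by (rule rev_finite_subset) auto
  define N where "N = part_len lam"
  have B: "1 \<le> k \<and> lam k \<noteq> 0 \<longleftrightarrow> 1 \<le> k \<and> k \<le> N" for k
    unfolding N_def part_len_def
  proof (rule downclosed_iff[of "\<lambda>k. 1 \<le> k \<and> lam k \<noteq> 0", OF fin])
    fix k k' assume "1 \<le> k \<and> lam k \<noteq> 0" "1 \<le> k'" "k' \<le> k"
    then show "1 \<le> k' \<and> lam k' \<noteq> 0" using part_mono[OF assms(1), of k' k] by auto
  qed simp
  show ?thesis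
  proof
    assume c: "part_len lam \<le> p"
    show "\<forall>k>p. lam k = 0"
    proof (intro allI impI)
      fix k assume k: "p < k"
      show "lam k = 0"
      proof (rule ccontr)
        assume "lam k \<noteq> 0"
        then have "k \<le> N" using B[of k] k by simp
        then show False using c k N_def by simp
      qed
    qed
  next
    assume h: "\<forall>k>p. lam k = 0"
    have "N \<le> p"
    proof (rule ccontr)
      assume "\<not> N \<le> p"
      then have "lam N \<noteq> 0" "1 \<le> N" using B[of N] by auto
      then show False using h \<open>\<not> N \<le> p\<close> by simp
    qed
    then show "part_len lam \<le> p" using N_def by simp
  qed
qed

lemma conj_iff: assumes "is_partition lam" "1 \<le> i" "1 \<le> k"
  shows "k \<le> part_conj lam i \<longleftrightarrow> i \<le> lam k"
proof -
  have "finite {i. lam i \<noteq> 0}" using assms(1) by (simp add: is_partition_def)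
  then have fin: "finite {k. 1 \<le> k \<and> i \<le> lam k}" using assms(2) by (rule_tac rev_finite_subset) auto
  define N where "N = card {k. 1 \<le> k \<and> i \<le> lam k}"
  have B: "1 \<le> k \<and> i \<le> lam k \<longleftrightarrow> 1 \<le> k \<and> k \<le> N" for k
    unfolding N_def
  proof (rule downclosed_iff[of "\<lambda>k. 1 \<le> k \<and> i \<le> lam k", OF fin])
    fix k k' assume "1 \<le> k \<and> i \<le> lam k" "1 \<le> k'" "k' \<le> k"
    then show "1 \<le> k' \<and> i \<le> lam k'" using part_mono[OF assms(1), of k' k] by auto
  qed simp
  have "part_conj lam i = N" unfolding part_conj_def N_def using assms by simp
  then show ?thesis using B[of k] assms(3) by simp
qed

lemma durfee_iff: assumes "is_partition lam" "1 \<le> i"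
  shows "i \<le> durfee lam \<longleftrightarrow> i \<le> lam i"
proof -
  have "finite {i. lam i \<noteq> 0}" using assms(1) by (simp add: is_partition_def)
  then have fin: "finite {i. 1 \<le> i \<and> i \<le> lam i}" by (rule rev_finite_subset) auto
  define N where "N = durfee lam"
  have B: "1 \<le> k \<and> k \<le> lam k \<longleftrightarrow> 1 \<le> k \<and> k \<le> N" for k
    unfolding N_def durfee_def
  proof (rule downclosed_iff[of "\<lambda>k. 1 \<le> k \<and> k \<le> lam k", OF fin])
    fix k k' assume "1 \<le> k \<and> k \<le> lam k" "1 \<le> k'" "k' \<le> k"
    then show "1 \<le> k' \<and> k' \<le> lam k'" using part_mono[OF assms(1), of k' k] by auto
  qed simp
  then show ?thesis using B[of i] assms(2) N_def by simp
qed

lemma Pset_Q: "Pset p = {lam. is_partition lam \<and> (\<forall>k>p. lam k = 0) \<and> Qc lam}"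
proof -
  have key: "(\<forall>i\<in>{1..durfee lam}. frob_beta lam i = frob_alpha lam i + 1) \<longleftrightarrow> Qc lam"
    if P: "is_partition lam" for lam
  proof -
    have "(\<forall>i\<in>{1..durfee lam}. frob_beta lam i = frob_alpha lam i + 1) \<longleftrightarrow>
          (\<forall>i. 1 \<le> i \<longrightarrow> i \<le> lam i \<longrightarrow> part_conj lam i = lam i + 1)"
    proof -
      have "(\<forall>i\<in>{1..durfee lam}. frob_beta lam i = frob_alpha lam i + 1) \<longleftrightarrow>
          (\<forall>i\<in>{1..durfee lam}. part_conj lam i = lam i + 1)"
        unfolding frob_beta_def frob_alpha_def by auto
      also have "\<dots> \<longleftrightarrow> (\<forall>i. 1 \<le> i \<longrightarrow> i \<le> lam i \<longrightarrow> part_conj lam i = lam i + 1)"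
        using durfee_iff[OF P] by (metis atLeastAtMost_iff)
      finally show ?thesis .
    qed
    also have "\<dots> \<longleftrightarrow> Qc lam"
    proof
      assume h: "\<forall>i. 1 \<le> i \<longrightarrow> i \<le> lam i \<longrightarrow> part_conj lam i = lam i + 1"
      show "Qc lam" unfolding Qc_def
      proof (intro allI impI)
        fix i j :: nat assume ij: "1 \<le> i" "i \<le> j"
        show "(j \<le> lam i) = (i \<le> lam (Suc j))"
        proof (cases "i \<le> lam i")
          case True
          then have "part_conj lam i = lam i + 1" using h ij by auto
          then show ?thesis using conj_iff[OF P ij(1), of "Suc j"] by auto
        next
          case False
          have "lam (Suc j) \<le> lam i" using part_mono[OF P ij(1)] ij by auto
          then show ?thesis using False ij by auto
        qed
      qed
    next
      assume Q: "Qc lam"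
      show "\<forall>i. 1 \<le> i \<longrightarrow> i \<le> lam i \<longrightarrow> part_conj lam i = lam i + 1"
      proof (intro allI impI)
        fix i :: nat assume i: "1 \<le> i" "i \<le> lam i"
        have a: "i \<le> lam (Suc (lam i))" using Q i unfolding Qc_def by auto
        have b: "\<not> i \<le> lam (Suc (Suc (lam i)))" using Q i unfolding Qc_def
          by (metis Suc_n_not_le_n le_SucI)
        have "Suc (lam i) \<le> part_conj lam i" using conj_iff[OF P i(1), of "Suc (lam i)"] a by auto
        moreover have "\<not> Suc (Suc (lam i)) \<le> part_conj lam i"
          using conj_iff[OF P i(1), of "Suc (Suc (lam i))"] b by auto
        ultimately show "part_conj lam i = lam i + 1" by auto
      qed
    qed
    finally show ?thesis .
  qed
  show ?thesis unfolding Pset_def using key part_len_le by blast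
qed

definition hook :: "nat \<Rightarrow> (nat \<Rightarrow> nat) \<Rightarrow> nat \<Rightarrow> nat" where
  "hook p mu = (\<lambda>i. if i = 0 then 0 else if i = 1 then p else if i \<le> Suc p then Suc (mu (i - 1)) else 0)"

lemma Pset_mem: "lam \<in> Pset p \<longleftrightarrow> is_partition lam \<and> (\<forall>k>p. lam k = 0) \<and> Qc lam"
  using Pset_Q by auto

lemma Pset_first_lt: assumes "mu \<in> Pset p" "1 \<le> p" shows "mu 1 < p"
proof (rule ccontr)
  assume "\<not> mu 1 < p"
  then have "p \<le> mu 1" by simp
  then have "1 \<le> mu (Suc p)" using assms unfolding Pset_mem Qc_def by auto
  then show False using assms unfolding Pset_mem by auto
qed

lemma hook_0[simp]: "hook p mu 0 = 0" by (simp add: hook_def)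
lemma hook_1[simp]: "hook p mu (Suc 0) = p" by (simp add: hook_def)
lemma hook_mid: "1 \<le> i \<Longrightarrow> i \<le> p \<Longrightarrow> hook p mu (Suc i) = Suc (mu i)" by (simp add: hook_def)
lemma hook_big: "Suc p < i \<Longrightarrow> hook p mu i = 0" by (simp add: hook_def)

lemma hook_in: assumes mu: "mu \<in> Pset p" shows "hook p mu \<in> Pset (Suc p)"
proof -
  have P: "is_partition mu" and Z: "\<forall>k>p. mu k = 0" and Q: "Qc mu" using mu unfolding Pset_mem by auto
  let ?l = "hook p mu"
  have part: "is_partition ?l"
    unfolding is_partition_def
  proof (intro conjI allI impI)
    show "?l 0 = 0" by simp
    fix i :: nat assume i: "1 \<le> i"
    show "?l (Suc i) \<le> ?l i"
    proof (cases "i = 1")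
      case True
      show ?thesis
      proof (cases "p = 0")
        case True then show ?thesis using \<open>i = 1\<close> by (simp add: hook_big)
      next
        case False
        then have "?l (Suc i) = Suc (mu 1)" using \<open>i = 1\<close> hook_mid[of 1 p mu] by simp
        then show ?thesis using Pset_first_lt[OF mu] False \<open>i = 1\<close> by simp
      qed
    next
      case False
      then obtain i' where i': "i = Suc i'" "1 \<le> i'" using i False by (cases i) auto
      show ?thesis
      proof (cases "i \<le> p")
        case True
        have "mu i \<le> mu i'" using P i' unfolding is_partition_def by simp
        then show ?thesis using True i' hook_mid[of i p mu] hook_mid[of i' p mu] by simp
      next
        case False
        then show ?thesis using hook_big[of p "Suc i" mu] by simp
      qed
    qed
  next
    show "finite {i. ?l i \<noteq> 0}"
    proof (rule finite_subset[of _ "{..Suc p}"])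
      show "{i. ?l i \<noteq> 0} \<subseteq> {..Suc p}"
      proof
        fix x assume "x \<in> {i. ?l i \<noteq> 0}"
        then show "x \<in> {..Suc p}" using hook_big[of p x mu] by (cases "Suc p < x") auto
      qed
    qed auto
  qed
  have Z': "\<forall>k>Suc p. ?l k = 0" by (simp add: hook_big)
  have mup: "mu i < p" if "1 \<le> i" "1 \<le> p" for i
  proof -
    have "mu i \<le> mu 1" using part_mono[OF P] that by auto
    then show ?thesis using Pset_first_lt[OF mu that(2)] by simp
  qed
  have Q': "Qc ?l" unfolding Qc_def
  proof (intro allI impI)
    fix i j :: nat assume ij: "1 \<le> i" "i \<le> j"
    show "(j \<le> ?l i) = (i \<le> ?l (Suc j))"
    proof (cases "i = 1")
      case True
      show ?thesis
      proof (cases "j \<le> p")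
        case True
        then have "?l (Suc j) = Suc (mu j)" using ij \<open>i = 1\<close> hook_mid[of j p mu] by simp
        then show ?thesis using True \<open>i = 1\<close> by simp
      next
        case False
        then have "?l (Suc j) = 0" using hook_big[of p "Suc j" mu] by simp
        then show ?thesis using False \<open>i = 1\<close> by simp
      qed
    next
      case False
      then obtain i' j' where ii: "i = Suc i'" "j = Suc j'" "1 \<le> i'" "i' \<le> j'"
        using ij False by (cases i; cases j) auto
      show ?thesis
      proof (cases "i' \<le> p")
        case True
        have li: "?l i = Suc (mu i')" using True ii hook_mid[of i' p mu] by simp
        show ?thesis
        proof (cases "Suc j' \<le> p")
          case True
          have "?l (Suc j) = Suc (mu (Suc j'))" using True ii hook_mid[of "Suc j'" p mu] by simp
          moreover have "(j' \<le> mu i') = (i' \<le> mu (Suc j'))" using Q ii unfolding Qc_def by blast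
          ultimately show ?thesis using li ii by simp
        next
          case False
          have "?l (Suc j) = 0" using False ii hook_big[of p "Suc j" mu] by simp
          moreover have "mu i' < p" using mup[of i'] ii \<open>i' \<le> p\<close> by simp
          ultimately show ?thesis using li ii False by simp
        qed
      next
        case False
        then show ?thesis using ii hook_big[of p i mu] hook_big[of p "Suc j" mu] by simp
      qed
    qed
  qed
  show ?thesis unfolding Pset_mem using part Z' Q' by auto
qed

lemma Pset_mono: "lam \<in> Pset p \<Longrightarrow> lam \<in> Pset (Suc p)"
  unfolding Pset_mem by auto

lemma Pset_Suc_cases: assumes l: "lam \<in> Pset (Suc p)"
  shows "lam \<in> Pset p \<or> (\<exists>mu\<in>Pset p. lam = hook p mu)"
proof (cases "lam (Suc p) = 0")
  case True
  then have "\<forall>k>p. lam k = 0" using l unfolding Pset_mem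
    by (metis Suc_lessI)
  then show ?thesis using l unfolding Pset_mem by auto
next
  case False
  have P: "is_partition lam" and Z: "\<forall>k>Suc p. lam k = 0" and Q: "Qc lam"
    using l unfolding Pset_mem by auto
  have l1le: "lam 1 \<le> p"
  proof (rule ccontr)
    assume "\<not> lam 1 \<le> p"
    then have "Suc p \<le> lam 1" by simp
    then have "1 \<le> lam (Suc (Suc p))" using Q unfolding Qc_def by auto
    then show False using Z by auto
  qed
  have p1: "1 \<le> p"
  proof (rule ccontr)
    assume "\<not> 1 \<le> p" then have "p = 0" by simp
    then show False using l1le False by simp
  qed
  have l1: "lam 1 = p"
  proof -
    have "p \<le> lam 1" using Q p1 False unfolding Qc_def by auto
    then show ?thesis using l1le by simp
  qed
  define mu where "mu = (\<lambda>i. if i = 0 then 0 else if i \<le> p then lam (Suc i) - 1 else 0)"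
  have pos: "1 \<le> lam k" if "1 \<le> k" "k \<le> Suc p" for k
    using part_mono[OF P that] False by auto
  have eq: "lam = hook p mu"
  proof
    fix i show "lam i = hook p mu i"
    proof (cases "i = 0")
      case True then show ?thesis using P by (simp add: is_partition_def hook_def)
    next
      case False
      show ?thesis
      proof (cases "i = 1")
        case True then show ?thesis using l1 by (simp add: hook_def)
      next
        case False
        show ?thesis
        proof (cases "i \<le> Suc p")
          case True
          then show ?thesis using pos[of i] False \<open>i \<noteq> 0\<close> unfolding hook_def mu_def by auto
        next
          case False then show ?thesis using Z unfolding hook_def mu_def by auto
        qed
      qed
    qed
  qed
  have muP: "is_partition mu" unfolding is_partition_def
  proof (intro conjI allI impI)
    show "mu 0 = 0" by (simp add: mu_def)
    fix i :: nat assume i: "1 \<le> i"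
    have "lam (Suc (Suc i)) \<le> lam (Suc i)" using P unfolding is_partition_def by simp
    then show "mu (Suc i) \<le> mu i"
      using i unfolding mu_def by (auto simp: diff_le_mono)
  next
    show "finite {i. mu i \<noteq> 0}"
      by (rule finite_subset[of _ "{..p}"]) (auto simp: mu_def split: if_splits)
  qed
  have muZ: "\<forall>k>p. mu k = 0" by (auto simp: mu_def)
  have muQ: "Qc mu" unfolding Qc_def
  proof (intro allI impI)
    fix i j :: nat assume ij: "1 \<le> i" "i \<le> j"
    have Qij: "(Suc j \<le> lam (Suc i)) = (Suc i \<le> lam (Suc (Suc j)))"
      using Q ij unfolding Qc_def by auto
    show "(j \<le> mu i) = (i \<le> mu (Suc j))"
    proof (cases "Suc j \<le> p")
      case True
      then show ?thesis using Qij ij pos[of "Suc i"] pos[of "Suc (Suc j)"] unfolding mu_def by auto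
    next
      case False
      have "lam (Suc i) \<le> lam 1" using part_mono[OF P] by auto
      then show ?thesis using False l1 ij unfolding mu_def by auto
    qed
  qed
  have "mu \<in> Pset p" unfolding Pset_mem using muP muZ muQ by auto
  then show ?thesis using eq by auto
qed

lemma Pset_Suc: "Pset (Suc p) = Pset p \<union> hook p ` Pset p"
proof -
  have "lam \<in> Pset (Suc p) \<longleftrightarrow> lam \<in> Pset p \<union> hook p ` Pset p" for lam
    using Pset_Suc_cases[of lam p] Pset_mono[of lam p] hook_in[of _ p] by auto
  then show ?thesis by (simp add: set_eq_iff)
qed

lemma Pset_0: "Pset 0 = {(\<lambda>_. 0)}"
proof -
  have "lam = (\<lambda>_. 0)" if "lam \<in> Pset 0" for lam
  proof
    fix i show "lam i = 0" using that unfolding Pset_mem is_partition_def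
      by (cases i) auto
  qed
  moreover have "(\<lambda>_. 0) \<in> Pset 0" unfolding Pset_mem is_partition_def Qc_def by auto
  ultimately show ?thesis by blast
qed

lemma Pset_finite: "finite (Pset p)"
  by (induction p) (auto simp: Pset_0 Pset_Suc)

lemma hook_disj: assumes "1 \<le> p" shows "Pset p \<inter> hook p ` Pset p = {}"
proof -
  have "lam (Suc p) = 0" if "lam \<in> Pset p" for lam using that unfolding Pset_mem by auto
  moreover have "hook p mu (Suc p) \<noteq> 0" for mu using assms by (auto simp: hook_def)
  ultimately show ?thesis by blast
qed

lemma hook_inj: "inj_on (hook p) (Pset p)"
proof
  fix mu mu' assume m: "mu \<in> Pset p" "mu' \<in> Pset p" and h: "hook p mu = hook p mu'"
  show "mu = mu'"
  proof
    fix i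
    show "mu i = mu' i"
    proof (cases "i = 0")
      case True then show ?thesis using m unfolding Pset_mem is_partition_def by auto
    next
      case False
      show ?thesis
      proof (cases "i \<le> p")
        case True
        have "hook p mu (Suc i) = hook p mu' (Suc i)" using h by simp
        then show ?thesis using True False by (auto simp: hook_def)
      next
        case False then show ?thesis using m unfolding Pset_mem by auto
      qed
    qed
  qed
qed

lemma part_size_sum: assumes "is_partition lam" "\<forall>k>p. lam k = 0"
  shows "part_size lam = (\<Sum>i\<in>{1..p}. lam i)"
  unfolding part_size_def
proof (rule sum.mono_neutral_left)
  show "{i. 1 \<le> i \<and> lam i \<noteq> 0} \<subseteq> {1..p}"
  proof
    fix i assume "i \<in> {i. 1 \<le> i \<and> lam i \<noteq> 0}"
    then show "i \<in> {1..p}" using assms(2)[rule_format, of i] by (cases "p < i") auto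
  qed
qed auto

lemma part_size_hook: assumes "mu \<in> Pset p"
  shows "part_size (hook p mu) = part_size mu + 2 * p"
proof -
  have h: "hook p mu \<in> Pset (Suc p)" using hook_in[OF assms] .
  have "part_size (hook p mu) = (\<Sum>i\<in>{1..Suc p}. hook p mu i)"
    using h unfolding Pset_mem using part_size_sum by blast
  also have "\<dots> = hook p mu 1 + (\<Sum>i\<in>{2..Suc p}. hook p mu i)"
    by (metis One_nat_def Suc_1 le_add1 plus_1_eq_Suc sum.atLeast_Suc_atMost)
  also have "(\<Sum>i\<in>{2..Suc p}. hook p mu i) = (\<Sum>i\<in>{1..p}. Suc (mu i))"
  proof -
    have "(\<Sum>i\<in>{2..Suc p}. hook p mu i) = (\<Sum>i\<in>{1..p}. hook p mu (Suc i))"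
      by (metis Suc_1 sum.shift_bounds_cl_Suc_ivl)
    also have "\<dots> = (\<Sum>i\<in>{1..p}. Suc (mu i))"
      by (rule sum.cong) (auto simp: hook_def)
    finally show ?thesis .
  qed
  also have "(\<Sum>i\<in>{1..p}. Suc (mu i)) = (\<Sum>i\<in>{1..p}. mu i) + p"
    unfolding Suc_eq_plus1 sum.distrib by simp
  also have "(\<Sum>i\<in>{1..p}. mu i) = part_size mu"
    using assms unfolding Pset_mem using part_size_sum by metis
  finally show ?thesis by (simp add: hook_def)
qed

lemma part_size_even: "lam \<in> Pset p \<Longrightarrow> even (part_size lam)"
proof (induction p arbitrary: lam)
  case 0 then show ?case by (simp add: Pset_0 part_size_def)
next
  case (Suc p)
  then show ?case unfolding Pset_Suc using part_size_hook by auto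
qed

lemma det_col_add:
  fixes A B :: "nat \<Rightarrow> 'a::comm_ring_1" and M :: "nat \<Rightarrow> nat \<Rightarrow> 'a"
  assumes c: "c < n"
  shows "det (mat n n (\<lambda>(i,j). if j = c then A i + B i else M i j)) =
         det (mat n n (\<lambda>(i,j). if j = c then A i else M i j)) +
         det (mat n n (\<lambda>(i,j). if j = c then B i else M i j))"
proof -
  define P where "P = (\<lambda>(g::nat \<Rightarrow> 'a) (s::nat \<Rightarrow> nat). \<Prod>i = 0..<n. (if s i = c then g i else M i (s i)))"
  have detg: "det (mat n n (\<lambda>(i,j). if j = c then g i else M i j)) =
     (\<Sum>s \<in> {s. s permutes {0..<n}}. signof s * P g s)" for g
  proof -
    have "det (mat n n (\<lambda>(i,j). if j = c then g i else M i j)) =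
       (\<Sum>s \<in> {s. s permutes {0..<n}}. signof s * (\<Prod>i = 0..<n. (mat n n (\<lambda>(i,j). if j = c then g i else M i j)) $$ (i, s i)))"
      by (rule det_def') simp
    also have "\<dots> = (\<Sum>s \<in> {s. s permutes {0..<n}}. signof s * P g s)"
    proof (rule sum.cong[OF refl])
      fix s assume s: "s \<in> {s. s permutes {0..<n}}"
      have "(\<Prod>i = 0..<n. (mat n n (\<lambda>(i,j). if j = c then g i else M i j)) $$ (i, s i)) = P g s"
        unfolding P_def
      proof (rule prod.cong[OF refl])
        fix i assume "i \<in> {0..<n}"
        then have "s i < n" using s permutes_in_image by fastforce
        then show "(mat n n (\<lambda>(i,j). if j = c then g i else M i j)) $$ (i, s i) = (if s i = c then g i else M i (s i))"
          using \<open>i \<in> {0..<n}\<close> by simp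
      qed
      then show "signof s * (\<Prod>i = 0..<n. (mat n n (\<lambda>(i,j). if j = c then g i else M i j)) $$ (i, s i)) = signof s * P g s"
        by simp
    qed
    finally show ?thesis .
  qed
  have split: "P (\<lambda>i. A i + B i) s = P A s + P B s" if s: "s permutes {0..<n}" for s
  proof -
    define i0 where "i0 = Hilbert_Choice.inv s c"
    have i0: "i0 \<in> {0..<n}" "s i0 = c" using s c unfolding i0_def
      by (auto simp: permutes_inverses(1) permutes_in_image permutes_inv)
    have other: "s i \<noteq> c" if "i \<noteq> i0" for i
      using that i0(2) s by (metis permutes_inj injD)
    have gen: "P g s = g i0 * (\<Prod>i \<in> {0..<n} - {i0}. M i (s i))" for g
    proof -
      have "P g s = (if s i0 = c then g i0 else M i0 (s i0)) * (\<Prod>i \<in> {0..<n} - {i0}. (if s i = c then g i else M i (s i)))"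
        unfolding P_def by (rule prod.remove[OF _ i0(1)]) simp
      also have "(\<Prod>i \<in> {0..<n} - {i0}. (if s i = c then g i else M i (s i))) = (\<Prod>i \<in> {0..<n} - {i0}. M i (s i))"
        by (rule prod.cong[OF refl]) (use other in auto)
      finally show ?thesis using i0(2) by simp
    qed
    show ?thesis unfolding gen by (simp add: distrib_right)
  qed
  show ?thesis unfolding detg
    by (simp add: split sum.distrib[symmetric] distrib_left)
qed

lemma det_rotate:
  fixes A :: "nat \<Rightarrow> nat \<Rightarrow> 'a::comm_ring_1"
  assumes "p < n"
  shows "det (mat n n (\<lambda>(i,j). if j < p then A i j else if j = p then B i else C i j)) =
    (-1)^p * det (mat n n (\<lambda>(i,j). if j = 0 then B i else if j \<le> p then A i (j - 1) else C i j))"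
proof -
  let ?M = "mat n n (\<lambda>(i,j). if j < p then A i j else if j = p then B i else C i j)"
  have "det ?M = (- 1) ^ (p * 1) *
    det (mat n n (\<lambda>(i, j). ?M $$ (i, if j < 1 then j + p else if j < p + 1 then j - 1 else j)))"
    by (rule det_swap_initial_cols) (use assms in auto)
  also have "mat n n (\<lambda>(i, j). ?M $$ (i, if j < 1 then j + p else if j < p + 1 then j - 1 else j))
    = mat n n (\<lambda>(i,j). if j = 0 then B i else if j \<le> p then A i (j - 1) else C i j)"
    by (rule eq_matI) (use assms in auto)
  finally show ?thesis by simp
qed

definition wc :: "nat \<Rightarrow> nat \<Rightarrow> 'a::comm_ring_1 \<Rightarrow> 'a" where
  "wc p j y = (if j = 0 then y ^ (p - 1) else y ^ (p - 1 - j) + y ^ (p - 1 + j))"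

definition GL :: "nat \<Rightarrow> nat \<Rightarrow> (nat \<Rightarrow> 'a::comm_ring_1) \<Rightarrow> nat \<Rightarrow> (nat \<Rightarrow> nat \<Rightarrow> 'a) \<Rightarrow> (nat \<Rightarrow> 'a) \<Rightarrow> 'a mat" where
  "GL n p r k C x = mat n n (\<lambda>(i,j). if j < p then r i * x i ^ k * wc p j (x i) else C i j)"

definition GR :: "nat \<Rightarrow> nat \<Rightarrow> (nat \<Rightarrow> 'a::comm_ring_1) \<Rightarrow> nat \<Rightarrow> (nat \<Rightarrow> nat \<Rightarrow> 'a) \<Rightarrow> (nat \<Rightarrow> 'a) \<Rightarrow> (nat \<Rightarrow> nat) \<Rightarrow> 'a mat" where
  "GR n p r k C x lam = mat n n (\<lambda>(i,j). if j < p then r i * x i ^ (k + lam (p - j) + j) else C i j)"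

lemma Pset_1: "Pset (Suc 0) = {(\<lambda>_. 0)}"
proof -
  have "hook 0 (\<lambda>_. 0) = (\<lambda>_. 0)" by (auto simp: hook_def)
  then show ?thesis using Pset_Suc[of 0] Pset_0 by simp
qed

lemma wc_Suc: "j < p \<Longrightarrow> y ^ k * wc (Suc p) j y = y ^ Suc k * wc p j y"
proof -
  assume j: "j < p"
  show ?thesis
  proof (cases "j = 0")
    case True
    have e: "k + p = Suc k + (p - 1)" using j by simp
    show ?thesis using True unfolding wc_def by (simp add: power_add[symmetric] e del: power_Suc add_Suc)
  next
    case False
    have e1: "Suc k + (p - 1 - j) = k + (p - j)" using j by simp
    have e2: "Suc k + (p - 1 + j) = k + (p + j)" using j by simp
    have e3: "Suc (k + (p - Suc j)) = k + (p - j)" using j by simp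
    have e4: "Suc (k + (p - Suc 0 + j)) = k + (p + j)" using j by simp
    show ?thesis using False unfolding wc_def
      by (simp add: distrib_left power_add[symmetric] e1 e2 del: power_Suc)
         (simp add: e3 e4)
  qed
qed

lemma G:
  fixes r x :: "nat \<Rightarrow> 'a::comm_ring_1"
  assumes "p \<le> n"
  shows "det (GL n p r k C x) = (-1)^(p choose 2) *
     (\<Sum>lam\<in>Pset p. (-1)^(part_size lam div 2) * det (GR n p r k C x lam))"
  using assms
proof (induction p arbitrary: k C)
  case 0
  have "GL n 0 r k C x = GR n 0 r k C x (\<lambda>_. 0)" unfolding GL_def GR_def by simp
  then show ?case by (simp add: Pset_0 part_size_def binomial_eq_0)
next
  case (Suc p)
  show ?case
  proof (cases "p = 0")
    case True
    have "GL n 1 r k C x = GR n 1 r k C x (\<lambda>_. 0)"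
      unfolding GL_def GR_def by (rule eq_matI) (auto simp: wc_def)
    then show ?thesis using True by (simp add: Pset_1 part_size_def binomial_eq_0)
  next
    case False
    then have p1: "1 \<le> p" by simp
    have pn: "p < n" "p \<le> n" using Suc.prems by auto
    define C1 where "C1 = (\<lambda>i j. if j = p then r i * x i ^ k else C i j)"
    define C2 where "C2 = (\<lambda>i j. if j = p then r i * x i ^ (k + 2 * p) else C i j)"
    define Mx where "Mx = (\<lambda>i j. if j < p then r i * x i ^ Suc k * wc p j (x i) else C i j)"
    have L: "GL n (Suc p) r k C x = mat n n (\<lambda>(i,j). if j = p then r i * x i ^ k + r i * x i ^ (k + 2 * p) else Mx i j)"
    proof (rule eq_matI)
      fix i j assume ij: "i < dim_row (mat n n (\<lambda>(i,j). if j = p then r i * x i ^ k + r i * x i ^ (k + 2 * p) else Mx i j))"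
        "j < dim_col (mat n n (\<lambda>(i,j). if j = p then r i * x i ^ k + r i * x i ^ (k + 2 * p) else Mx i j))"
      then have ij': "i < n" "j < n" by auto
      consider "j < p" | "j = p" | "j > p" by linarith
      then show "GL n (Suc p) r k C x $$ (i, j) = mat n n (\<lambda>(i,j). if j = p then r i * x i ^ k + r i * x i ^ (k + 2 * p) else Mx i j) $$ (i, j)"
      proof cases
        case 1 then show ?thesis using ij' wc_Suc[OF 1, of "x i" k] unfolding GL_def Mx_def
          by (simp add: mult.assoc)
      next
        case 2 then show ?thesis using ij' p1 unfolding GL_def Mx_def wc_def
          by (simp add: distrib_left power_add mult_2)
      next
        case 3 then show ?thesis using ij' unfolding GL_def Mx_def by simp
      qed
    qed (auto simp: GL_def)
    have M1: "mat n n (\<lambda>(i,j). if j = p then r i * x i ^ k else Mx i j) = GL n p r (Suc k) C1 x"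
      unfolding GL_def C1_def Mx_def by (rule eq_matI) auto
    have M2: "mat n n (\<lambda>(i,j). if j = p then r i * x i ^ (k + 2 * p) else Mx i j) = GL n p r (Suc k) C2 x"
      unfolding GL_def C2_def Mx_def by (rule eq_matI) auto
    have LHS: "det (GL n (Suc p) r k C x) = det (GL n p r (Suc k) C1 x) + det (GL n p r (Suc k) C2 x)"
      unfolding L M1[symmetric] M2[symmetric] by (rule det_col_add[OF pn(1)])
    have R1: "det (GR n (Suc p) r k C x lam) = (-1)^p * det (GR n p r (Suc k) C1 x lam)"
      if lam: "lam \<in> Pset p" for lam
    proof -
      have l0: "lam (Suc p) = 0" using lam unfolding Pset_mem by auto
      have "det (GR n p r (Suc k) C1 x lam) = det (mat n n (\<lambda>(i,j). if j < p then r i * x i ^ (Suc k + lam (p - j) + j)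
            else if j = p then r i * x i ^ k else C i j))"
        unfolding GR_def C1_def by (rule arg_cong[where f=det], rule eq_matI) auto
      also have "\<dots> = (-1)^p * det (mat n n (\<lambda>(i,j). if j = 0 then r i * x i ^ k else if j \<le> p then r i * x i ^ (Suc k + lam (p - (j - 1)) + (j - 1)) else C i j))"
        by (rule det_rotate[OF pn(1)])
      also have "mat n n (\<lambda>(i,j). if j = 0 then r i * x i ^ k else if j \<le> p then r i * x i ^ (Suc k + lam (p - (j - 1)) + (j - 1)) else C i j)
          = GR n (Suc p) r k C x lam"
      proof (rule eq_matI)
        fix i j assume "i < dim_row (GR n (Suc p) r k C x lam)" "j < dim_col (GR n (Suc p) r k C x lam)"
        then have ij: "i < n" "j < n" unfolding GR_def by auto
        consider "j = 0" | "1 \<le> j" "j \<le> p" | "p < j" by linarith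
        then show "mat n n (\<lambda>(i,j). if j = 0 then r i * x i ^ k else if j \<le> p then r i * x i ^ (Suc k + lam (p - (j - 1)) + (j - 1)) else C i j) $$ (i, j)
          = GR n (Suc p) r k C x lam $$ (i, j)"
        proof cases
          case 1 then show ?thesis using ij l0 unfolding GR_def by simp
        next
          case 2
          have e: "Suc k + lam (p - (j - 1)) + (j - 1) = k + lam (Suc p - j) + j" using 2
            by (simp add: Suc_diff_le)
          show ?thesis using ij 2 e unfolding GR_def by simp
        next
          case 3 then show ?thesis using ij unfolding GR_def by simp
        qed
      qed (auto simp: GR_def)
      finally have "det (GR n p r (Suc k) C1 x lam) = (-1)^p * det (GR n (Suc p) r k C x lam)" .
      then show ?thesis by simp
    qed
    have R2: "det (GR n (Suc p) r k C x (hook p lam)) = det (GR n p r (Suc k) C2 x lam)" for lam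
    proof -
      have "GR n (Suc p) r k C x (hook p lam) = GR n p r (Suc k) C2 x lam"
      proof (rule eq_matI)
        fix i j assume "i < dim_row (GR n p r (Suc k) C2 x lam)" "j < dim_col (GR n p r (Suc k) C2 x lam)"
        then have ij: "i < n" "j < n" unfolding GR_def by auto
        consider "j < p" | "j = p" | "p < j" by linarith
        then show "GR n (Suc p) r k C x (hook p lam) $$ (i, j) = GR n p r (Suc k) C2 x lam $$ (i, j)"
        proof cases
          case 1
          have h: "hook p lam (Suc p - j) = Suc (lam (p - j))"
            using hook_mid[of "p - j" p lam] 1 by (simp add: Suc_diff_le)
          show ?thesis using ij 1 h unfolding GR_def C2_def by simp
        next
          case 2 then show ?thesis using ij unfolding GR_def C2_def by (simp add: mult_2 add.assoc)
        next
          case 3 then show ?thesis using ij unfolding GR_def C2_def by simp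
        qed
      qed (auto simp: GR_def)
      then show ?thesis by simp
    qed
    define f where "f = (\<lambda>lam. (-1)^(part_size lam div 2) * det (GR n (Suc p) r k C x lam) :: 'a)"
    have "(\<Sum>lam\<in>Pset (Suc p). f lam) = (\<Sum>lam\<in>Pset p. f lam) + (\<Sum>lam\<in>hook p ` Pset p. f lam)"
      unfolding Pset_Suc by (rule sum.union_disjoint) (use Pset_finite hook_disj[OF p1] in auto)
    also have "(\<Sum>lam\<in>hook p ` Pset p. f lam) = (\<Sum>lam\<in>Pset p. f (hook p lam))"
      by (simp add: sum.reindex[OF hook_inj])
    also have "(\<Sum>lam\<in>Pset p. f lam) = (-1)^p * (\<Sum>lam\<in>Pset p. (-1)^(part_size lam div 2) * det (GR n p r (Suc k) C1 x lam))"
      unfolding sum_distrib_left f_def by (rule sum.cong[OF refl]) (simp add: R1 ac_simps)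
    also have "(\<Sum>lam\<in>Pset p. f (hook p lam)) = (-1)^p * (\<Sum>lam\<in>Pset p. (-1)^(part_size lam div 2) * det (GR n p r (Suc k) C2 x lam))"
      unfolding sum_distrib_left f_def
    proof (rule sum.cong[OF refl])
      fix lam assume "lam \<in> Pset p"
      have "part_size (hook p lam) div 2 = part_size lam div 2 + p"
        using part_size_hook[OF \<open>lam \<in> Pset p\<close>] by simp
      then show "(-1)^(part_size (hook p lam) div 2) * det (GR n (Suc p) r k C x (hook p lam)) =
         (-1)^p * ((-1)^(part_size lam div 2) * det (GR n p r (Suc k) C2 x lam) :: 'a)"
        by (simp add: R2 power_add ac_simps)
    qed
    finally have S: "(\<Sum>lam\<in>Pset (Suc p). f lam) = (-1)^p * ((\<Sum>lam\<in>Pset p. (-1)^(part_size lam div 2) * det (GR n p r (Suc k) C1 x lam))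
       + (\<Sum>lam\<in>Pset p. (-1)^(part_size lam div 2) * det (GR n p r (Suc k) C2 x lam)))"
      by (simp add: distrib_left)
    have ch: "Suc p choose 2 = (p choose 2) + p"
      by (simp add: numeral_2_eq_2 add.commute)
    have sq: "((-1::'a)^p) * (-1)^p = 1"
      by (simp add: power_add[symmetric] mult_2[symmetric])
    show ?thesis
      unfolding f_def[symmetric] S LHS Suc.IH[OF pn(2)] ch power_add
      by (simp add: distrib_left ac_simps sq)
  qed
qed

definition tc :: "nat \<Rightarrow> nat \<Rightarrow> 'a::comm_ring_1" where
  "tc m j = (if m \<le> j \<and> even (j - m) then of_nat (j choose ((j - m) div 2)) else 0)"

lemma key_id:
  fixes y :: "'a::comm_ring_1"
  assumes jp: "j < p"
  shows "(\<Sum>m<p. wc p m y * tc m j) = y ^ (p - 1 - j) * (1 + y\<^sup>2) ^ j"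
proof -
  define Ms where "Ms = {m. m \<le> j \<and> even (j - m)}"
  define tm where "tm = (\<lambda>k. of_nat (j choose k) * y ^ (p - 1 - j + 2 * k) :: 'a)"
  have finMs: "finite Ms" unfolding Ms_def by simp
  have S1: "(\<Sum>m<p. wc p m y * tc m j) = (\<Sum>m\<in>Ms. of_nat (j choose ((j - m) div 2)) * wc p m y)"
  proof (rule sum.mono_neutral_cong_right)
    show "Ms \<subseteq> {..<p}" using jp unfolding Ms_def by auto
    show "\<forall>i\<in>{..<p} - Ms. wc p i y * tc i j = 0" unfolding Ms_def tc_def by auto
    show "\<And>x. x \<in> Ms \<Longrightarrow> wc p x y * tc x j = of_nat (j choose ((j - x) div 2)) * wc p x y"
      unfolding Ms_def tc_def by (auto simp: mult.commute)
  qed simp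
  have S2: "of_nat (j choose ((j - m) div 2)) * wc p m y =
      tm ((j - m) div 2) + (if m = 0 then 0 else tm ((j + m) div 2))" if m: "m \<in> Ms" for m
  proof -
    have mj: "m \<le> j" "even (j - m)" using m unfolding Ms_def by auto
    from mj(2) obtain t where t: "j - m = 2 * t" by (rule evenE)
    have jt: "j = m + 2 * t" using t mj(1) by simp
    have d1: "(j - m) div 2 = t" using t by simp
    have d2: "(j + m) div 2 = m + t" using jt by simp
    have e1: "p - 1 - j + 2 * ((j - m) div 2) = p - 1 - m" unfolding d1 using jt jp by simp
    have e2: "p - 1 - j + 2 * ((j + m) div 2) = p - 1 + m" unfolding d2 using jt jp by simp
    have c: "j choose ((j + m) div 2) = j choose ((j - m) div 2)"
    proof -
      have "(j + m) div 2 \<le> j" using d2 jt by simp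
      moreover have "j - (j + m) div 2 = (j - m) div 2" using d1 d2 jt by simp
      ultimately show ?thesis using binomial_symmetric by metis
    qed
    show ?thesis
      unfolding tm_def wc_def e1 e2 c by (simp add: distrib_left)
  qed
  have "(\<Sum>m\<in>Ms. of_nat (j choose ((j - m) div 2)) * wc p m y) =
      (\<Sum>m\<in>Ms. tm ((j - m) div 2)) + (\<Sum>m\<in>Ms. (if m = 0 then 0 else tm ((j + m) div 2)))"
    by (simp add: S2 sum.distrib)
  also have "(\<Sum>m\<in>Ms. tm ((j - m) div 2)) = (\<Sum>k\<in>{k. 2 * k \<le> j}. tm k)"
  proof (rule sum.reindex_bij_witness[where i="\<lambda>k. j - 2 * k" and j="\<lambda>m. (j - m) div 2"])
    show "\<And>a. a \<in> Ms \<Longrightarrow> j - 2 * ((j - a) div 2) = a" unfolding Ms_def by auto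
    show "\<And>a. a \<in> Ms \<Longrightarrow> (j - a) div 2 \<in> {k. 2 * k \<le> j}" unfolding Ms_def by auto
    show "\<And>b. b \<in> {k. 2 * k \<le> j} \<Longrightarrow> (j - (j - 2 * b)) div 2 = b" by auto
    show "\<And>b. b \<in> {k. 2 * k \<le> j} \<Longrightarrow> j - 2 * b \<in> Ms" unfolding Ms_def by auto
  qed simp
  also have "(\<Sum>m\<in>Ms. (if m = 0 then 0 else tm ((j + m) div 2))) = (\<Sum>m\<in>Ms - {0}. tm ((j + m) div 2))"
    by (rule sum.mono_neutral_cong_right) (use finMs in auto)
  also have "(\<Sum>m\<in>Ms - {0}. tm ((j + m) div 2)) = (\<Sum>k\<in>{k. j < 2 * k \<and> k \<le> j}. tm k)"
  proof (rule sum.reindex_bij_witness[where i="\<lambda>k. 2 * k - j" and j="\<lambda>m. (j + m) div 2"])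
    show "\<And>a. a \<in> Ms - {0} \<Longrightarrow> 2 * ((j + a) div 2) - j = a" unfolding Ms_def by auto
    show "\<And>a. a \<in> Ms - {0} \<Longrightarrow> (j + a) div 2 \<in> {k. j < 2 * k \<and> k \<le> j}" unfolding Ms_def by auto
    show "\<And>b. b \<in> {k. j < 2 * k \<and> k \<le> j} \<Longrightarrow> (j + (2 * b - j)) div 2 = b" by auto
    show "\<And>b. b \<in> {k. j < 2 * k \<and> k \<le> j} \<Longrightarrow> 2 * b - j \<in> Ms - {0}" unfolding Ms_def by auto
  qed simp
  also have "(\<Sum>k\<in>{k. 2 * k \<le> j}. tm k) + (\<Sum>k\<in>{k. j < 2 * k \<and> k \<le> j}. tm k) = (\<Sum>k\<le>j. tm k)"
  proof -
    have u: "{..j} = {k. 2 * k \<le> j} \<union> {k. j < 2 * k \<and> k \<le> j}" by auto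
    have fA: "finite {k. 2 * k \<le> j}" by (rule finite_subset[of _ "{..j}"]) auto
    have fB: "finite {k. j < 2 * k \<and> k \<le> j}" by (rule finite_subset[of _ "{..j}"]) auto
    have d: "{k. 2 * k \<le> j} \<inter> {k. j < 2 * k \<and> k \<le> j} = {}" by auto
    show ?thesis unfolding u by (rule sum.union_disjoint[OF fA fB d, symmetric])
  qed
  also have "(\<Sum>k\<le>j. tm k) = y ^ (p - 1 - j) * (1 + y\<^sup>2) ^ j"
  proof -
    have "(1 + y\<^sup>2) ^ j = (y\<^sup>2 + 1) ^ j" by (simp add: add.commute)
    also have "\<dots> = (\<Sum>k\<le>j. of_nat (j choose k) * (y\<^sup>2) ^ k * 1 ^ (j - k))" by (rule binomial_ring)
    finally have "y ^ (p - 1 - j) * (1 + y\<^sup>2) ^ j = (\<Sum>k\<le>j. y ^ (p - 1 - j) * (of_nat (j choose k) * (y\<^sup>2) ^ k))"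
      by (simp add: sum_distrib_left)
    also have "\<dots> = (\<Sum>k\<le>j. tm k)"
    proof (rule sum.cong[OF refl])
      fix k
      have "(y\<^sup>2) ^ k = y ^ (2 * k)" by (simp add: power_mult)
      then show "y ^ (p - 1 - j) * (of_nat (j choose k) * (y\<^sup>2) ^ k) = tm k"
        unfolding tm_def by (simp add: power_add ac_simps)
    qed
    finally show ?thesis by simp
  qed
  finally show ?thesis using S1 by simp
qed

definition Wm :: "nat \<Rightarrow> nat \<Rightarrow> (nat \<Rightarrow> 'a::comm_ring_1) \<Rightarrow> (nat \<Rightarrow> 'a) \<Rightarrow> 'a mat" where
  "Wm p q x a = mat (p + q) (p + q) (\<lambda>(i, j). if j < p then wc p j (x i) else a i * wc q (j - p) (x i))"

definition Tm :: "nat \<Rightarrow> nat \<Rightarrow> 'a::comm_ring_1 mat" where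
  "Tm p q = mat (p + q) (p + q) (\<lambda>(m, j). if j < p then (if m < p then tc m j else 0)
      else (if m < p then 0 else tc (m - p) (j - p)))"

lemma det_Tm: "det (Tm p q :: 'a::comm_ring_1 mat) = 1"
proof -
  have ut: "upper_triangular (Tm p q :: 'a mat)"
    unfolding upper_triangular_def Tm_def by (auto simp: tc_def)
  have "det (Tm p q :: 'a mat) = prod_list (diag_mat (Tm p q :: 'a mat))"
    by (rule det_upper_triangular[OF ut, of "p+q"]) (simp add: Tm_def)
  also have "diag_mat (Tm p q :: 'a mat) = map (\<lambda>_. 1) [0..<p+q]"
    unfolding diag_mat_def Tm_def by (auto simp: tc_def)
  also have "prod_list (map (\<lambda>_. 1::'a) xs) = 1" for xs :: "nat list"
    by (induction xs) auto
  finally show ?thesis .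
qed

lemma U_eq_WT: "Umat p q x a = Wm p q x a * Tm p q"
proof (rule eq_matI)
  fix i j assume "i < dim_row (Wm p q x a * Tm p q)" "j < dim_col (Wm p q x a * Tm p q)"
  then have ij: "i < p + q" "j < p + q" by (auto simp: Wm_def Tm_def)
  have prod: "(Wm p q x a * Tm p q) $$ (i, j) = (\<Sum>m<p+q. Wm p q x a $$ (i, m) * Tm p q $$ (m, j))"
    using ij by (simp add: Wm_def Tm_def scalar_prod_def atLeast0LessThan)
  have split: "(\<Sum>m<p+q. f m) = (\<Sum>m<p. f m) + (\<Sum>m<q. f (p + m))" for f :: "nat \<Rightarrow> 'a"
  proof -
    have "(\<Sum>m<p+q. f m) = (\<Sum>m\<in>{0..<p}. f m) + (\<Sum>m\<in>{p..<p+q}. f m)"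
      by (simp add: atLeast0LessThan[symmetric] sum.atLeastLessThan_concat)
    also have "(\<Sum>m\<in>{p..<p+q}. f m) = (\<Sum>m\<in>{0..<q}. f (p + m))"
      using sum.shift_bounds_nat_ivl[of f 0 p q] by (simp add: add.commute)
    finally show ?thesis by (simp add: atLeast0LessThan)
  qed
  show "Umat p q x a $$ (i, j) = (Wm p q x a * Tm p q) $$ (i, j)"
  proof (cases "j < p")
    case True
    have "(Wm p q x a * Tm p q) $$ (i, j) = (\<Sum>m<p. wc p m (x i) * tc m j)"
      unfolding prod split using True ij by (simp add: Wm_def Tm_def)
    also have "\<dots> = x i ^ (p - 1 - j) * (1 + (x i)\<^sup>2) ^ j" by (rule key_id[OF True])
    finally show ?thesis using True ij by (simp add: Umat_def)
  next
    case False
    then have jq: "j - p < q" using ij by simp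
    have "(Wm p q x a * Tm p q) $$ (i, j) = (\<Sum>m<q. a i * wc q m (x i) * tc m (j - p))"
      unfolding prod split using False ij by (simp add: Wm_def Tm_def)
    also have "\<dots> = a i * (\<Sum>m<q. wc q m (x i) * tc m (j - p))"
      by (simp add: sum_distrib_left mult.assoc)
    also have "\<dots> = a i * (x i ^ (q - 1 - (j - p)) * (1 + (x i)\<^sup>2) ^ (j - p))" by (simp add: key_id[OF jq])
    finally show ?thesis using False ij by (simp add: Umat_def mult.assoc)
  qed
qed (auto simp: Umat_def Wm_def Tm_def)

lemma det_U_W: "det (Umat p q x a) = det (Wm p q x a)"
proof -
  have "det (Wm p q x a * Tm p q) = det (Wm p q x a) * det (Tm p q)"
    by (rule det_mult[of _ "p+q"]) (auto simp: Wm_def Tm_def)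
  then show ?thesis by (simp add: U_eq_WT det_Tm)
qed

lemma det_scale_rows:
  fixes d :: "nat \<Rightarrow> 'a::comm_ring_1"
  shows "det (mat n n (\<lambda>(i,j). d i * M i j)) = (\<Prod>i<n. d i) * det (mat n n (\<lambda>(i,j). M i j))"
proof -
  have "det (mat n n (\<lambda>(i,j). d i * M i j)) =
     (\<Sum>s \<in> {s. s permutes {0..<n}}. signof s * (\<Prod>i = 0..<n. (mat n n (\<lambda>(i,j). d i * M i j)) $$ (i, s i)))"
    by (rule det_def') simp
  also have "\<dots> = (\<Sum>s \<in> {s. s permutes {0..<n}}. (\<Prod>i<n. d i) * (signof s * (\<Prod>i = 0..<n. (mat n n (\<lambda>(i,j). M i j)) $$ (i, s i))))"
  proof (rule sum.cong[OF refl])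
    fix s assume s: "s \<in> {s. s permutes {0..<n}}"
    have "(\<Prod>i = 0..<n. (mat n n (\<lambda>(i,j). d i * M i j)) $$ (i, s i)) = (\<Prod>i = 0..<n. d i * (mat n n (\<lambda>(i,j). M i j)) $$ (i, s i))"
    proof (rule prod.cong[OF refl])
      fix i assume "i \<in> {0..<n}"
      then have "s i < n" using s permutes_in_image by fastforce
      then show "(mat n n (\<lambda>(i,j). d i * M i j)) $$ (i, s i) = d i * (mat n n (\<lambda>(i,j). M i j)) $$ (i, s i)"
        using \<open>i \<in> {0..<n}\<close> by simp
    qed
    then show "signof s * (\<Prod>i = 0..<n. (mat n n (\<lambda>(i,j). d i * M i j)) $$ (i, s i)) =
       (\<Prod>i<n. d i) * (signof s * (\<Prod>i = 0..<n. (mat n n (\<lambda>(i,j). M i j)) $$ (i, s i)))"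
      by (simp add: prod.distrib atLeast0LessThan ac_simps)
  qed
  also have "\<dots> = (\<Prod>i<n. d i) * (\<Sum>s \<in> {s. s permutes {0..<n}}. signof s * (\<Prod>i = 0..<n. (mat n n (\<lambda>(i,j). M i j)) $$ (i, s i)))"
    by (simp only: sum_distrib_left)
  also have "(\<Sum>s \<in> {s. s permutes {0..<n}}. signof s * (\<Prod>i = 0..<n. (mat n n (\<lambda>(i,j). M i j)) $$ (i, s i))) = det (mat n n (\<lambda>(i,j). M i j))"
    by (rule det_def'[symmetric]) simp
  finally show ?thesis .
qed

lemma powi_aux:
  fixes x :: "'a::field"
  assumes x: "x \<noteq> 0" and j: "j < m"
  shows "x powi (int m - 1) * (x + inverse x) ^ j = x ^ (m - 1 - j) * (1 + x\<^sup>2) ^ j"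
proof -
  have e: "int m - 1 = int (m - 1)" using j by linarith
  have "x powi (int m - 1) = x ^ (m - 1)" unfolding e by (rule power_int_of_nat)
  also have "x ^ (m - 1) = x ^ (m - 1 - j) * x ^ j" using j by (simp add: power_add[symmetric])
  finally have "x powi (int m - 1) * (x + inverse x) ^ j = x ^ (m - 1 - j) * (x ^ j * (x + inverse x) ^ j)"
    by (simp only: mult.assoc)
  also have "x ^ j * (x + inverse x) ^ j = (x * (x + inverse x)) ^ j" by (rule power_mult_distrib[symmetric])
  also have "x * (x + inverse x) = 1 + x\<^sup>2" using x by (simp add: distrib_left power2_eq_square)
  finally show ?thesis .
qed

lemma U_V0:
  fixes x a :: "nat \<Rightarrow> 'a::field"
  assumes x: "\<forall>i < p + q. x i \<noteq> 0"
  shows "det (Umat p q x a) = (\<Prod>i<p + q. x i powi (int p - 1)) *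
           det (V0mat p q (\<lambda>i. x i + inverse (x i)) (\<lambda>i. a i * x i powi (int q - int p)))"
proof -
  define M where "M = (\<lambda>i j. if j < p then (x i + inverse (x i)) ^ j
      else a i * x i powi (int q - int p) * (x i + inverse (x i)) ^ (j - p))"
  have V: "V0mat p q (\<lambda>i. x i + inverse (x i)) (\<lambda>i. a i * x i powi (int q - int p)) = mat (p+q) (p+q) (\<lambda>(i,j). M i j)"
    unfolding V0mat_def Vmat_def M_def by (rule eq_matI) auto
  have U: "Umat p q x a = mat (p+q) (p+q) (\<lambda>(i,j). x i powi (int p - 1) * M i j)"
  proof (rule eq_matI)
    fix i j assume "i < dim_row (mat (p+q) (p+q) (\<lambda>(i,j). x i powi (int p - 1) * M i j))"
      "j < dim_col (mat (p+q) (p+q) (\<lambda>(i,j). x i powi (int p - 1) * M i j))"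
    then have ij: "i < p + q" "j < p + q" by auto
    have xi: "x i \<noteq> 0" using x ij by auto
    show "Umat p q x a $$ (i, j) = mat (p+q) (p+q) (\<lambda>(i,j). x i powi (int p - 1) * M i j) $$ (i, j)"
    proof (cases "j < p")
      case True
      then show ?thesis using ij powi_aux[OF xi True] unfolding Umat_def M_def by simp
    next
      case False
      then have jq: "j - p < q" using ij by simp
      have e: "x i powi (int p - 1) * x i powi (int q - int p) = x i powi (int q - 1)"
        using xi by (simp add: power_int_add[symmetric])
      have "x i powi (int p - 1) * M i j = a i * (x i powi (int q - 1) * (x i + inverse (x i)) ^ (j - p))"
        unfolding M_def using False e by (simp add: ac_simps)
      also have "\<dots> = a i * (x i ^ (q - 1 - (j - p)) * (1 + (x i)\<^sup>2) ^ (j - p))"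
        by (simp add: powi_aux[OF xi jq])
      finally show ?thesis using ij False unfolding Umat_def by (simp add: mult.assoc)
    qed
  qed (auto simp: Umat_def)
  show ?thesis unfolding U V by (rule det_scale_rows)
qed

lemma G':
  fixes r x :: "nat \<Rightarrow> 'a::comm_ring_1"
  assumes "p \<le> n"
  shows "(\<Sum>lam\<in>Pset p. (-1)^(part_size lam div 2) * det (GR n p r k C x lam)) = (-1)^(p choose 2) * det (GL n p r k C x)"
proof -
  have sq: "((-1::'a)^(p choose 2)) * (-1)^(p choose 2) = 1"
    by (simp add: power_add[symmetric] mult_2[symmetric])
  show ?thesis unfolding G[OF assms] by (simp add: mult.assoc[symmetric] sq)
qed

lemma even_div_add: "even (a::nat) \<Longrightarrow> (a + b) div 2 = a div 2 + b div 2"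
  by (auto elim!: evenE)

theorem mainTheorem5:
  fixes p q :: nat and x a :: "nat \<Rightarrow> 'a::field"
  assumes "\<forall>i < p + q. x i \<noteq> 0"
  shows "Ffun p q x a =
           (-1) ^ ((p choose 2) + (q choose 2)) * (\<Prod>i<p + q. x i powi (int p - 1)) *
           det (V0mat p q (\<lambda>i. x i + inverse (x i)) (\<lambda>i. a i * x i powi (int q - int p)))
       \<and> (-1) ^ ((p choose 2) + (q choose 2)) * (\<Prod>i<p + q. x i powi (int p - 1)) *
           det (V0mat p q (\<lambda>i. x i + inverse (x i)) (\<lambda>i. a i * x i powi (int q - int p)))
         = (-1) ^ ((p choose 2) + (q choose 2)) * det (Umat p q x a)"
proof -
  define n where "n = p + q"
  define Cmu where "Cmu = (\<lambda>(mu::nat\<Rightarrow>nat) i j. a i * x i ^ (mu (q - (j - p)) + (j - p)))"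
  define C' where "C' = (\<lambda>i j. wc p (j - q) (x i) :: 'a)"
  define sg where "sg = (\<lambda>lam. (-1::'a)^(part_size lam div 2))"
  have V: "Vmat p q lam mu x a = GR n p (\<lambda>_. 1) 0 (Cmu mu) x lam" for lam mu
    unfolding Vmat_def GR_def Cmu_def n_def by (rule eq_matI) auto
  have s1: "Ffun p q x a = (\<Sum>mu\<in>Pset q. sg mu * (\<Sum>lam\<in>Pset p. sg lam * det (GR n p (\<lambda>_. 1) 0 (Cmu mu) x lam)))"
  proof -
    have "Ffun p q x a = (\<Sum>lam\<in>Pset p. \<Sum>mu\<in>Pset q. sg mu * (sg lam * det (GR n p (\<lambda>_. 1) 0 (Cmu mu) x lam)))"
      unfolding Ffun_def
    proof (intro sum.cong refl)
      fix lam mu assume "lam \<in> Pset p" "mu \<in> Pset q"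
      then have "(part_size lam + part_size mu) div 2 = part_size lam div 2 + part_size mu div 2"
        using part_size_even even_div_add by blast
      then show "(-1) ^ ((part_size lam + part_size mu) div 2) * det (Vmat p q lam mu x a) =
          sg mu * (sg lam * det (GR n p (\<lambda>_. 1) 0 (Cmu mu) x lam))"
        unfolding sg_def V by (simp add: power_add ac_simps)
    qed
    also have "\<dots> = (\<Sum>mu\<in>Pset q. \<Sum>lam\<in>Pset p. sg mu * (sg lam * det (GR n p (\<lambda>_. 1) 0 (Cmu mu) x lam)))"
      by (rule sum.swap)
    also have "\<dots> = (\<Sum>mu\<in>Pset q. sg mu * (\<Sum>lam\<in>Pset p. sg lam * det (GR n p (\<lambda>_. 1) 0 (Cmu mu) x lam)))"
      by (simp add: sum_distrib_left)
    finally show ?thesis .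
  qed
  have s2: "(\<Sum>lam\<in>Pset p. sg lam * det (GR n p (\<lambda>_. 1) 0 (Cmu mu) x lam)) = (-1)^(p choose 2) * det (GL n p (\<lambda>_. 1) 0 (Cmu mu) x)" for mu
    unfolding sg_def by (rule G') (simp add: n_def)
  have s3: "det (GL n p (\<lambda>_. 1) 0 (Cmu mu) x) = (-1)^(q*p) * det (GR n q a 0 C' x mu)" for mu
  proof -
    have A: "GL n p (\<lambda>_. 1) 0 (Cmu mu) x \<in> carrier_mat (q + p) (q + p)" by (simp add: GL_def n_def add.commute)
    have "det (GL n p (\<lambda>_. 1) 0 (Cmu mu) x) = (-1)^(q*p) * det (mat (q + p) (q + p) (\<lambda>(i,j).
      GL n p (\<lambda>_. 1) 0 (Cmu mu) x $$ (i, if j < q then j + p else j - q)))"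
      by (rule det_swap_cols[OF A])
    also have "mat (q + p) (q + p) (\<lambda>(i,j). GL n p (\<lambda>_. 1) 0 (Cmu mu) x $$ (i, if j < q then j + p else j - q))
      = GR n q a 0 C' x mu"
      by (rule eq_matI) (auto simp: GL_def GR_def n_def Cmu_def C'_def)
    finally show ?thesis .
  qed
  have s4: "(\<Sum>mu\<in>Pset q. sg mu * det (GR n q a 0 C' x mu)) = (-1)^(q choose 2) * det (GL n q a 0 C' x)"
    unfolding sg_def by (rule G') (simp add: n_def)
  have s5: "det (Wm p q x a) = (-1)^(q*p) * det (GL n q a 0 C' x)"
  proof -
    have A: "Wm p q x a \<in> carrier_mat (q + p) (q + p)" by (simp add: Wm_def add.commute)
    have "det (Wm p q x a) = (-1)^(q*p) * det (mat (q + p) (q + p) (\<lambda>(i,j).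
      Wm p q x a $$ (i, if j < q then j + p else j - q)))"
      by (rule det_swap_cols[OF A])
    also have "mat (q + p) (q + p) (\<lambda>(i,j). Wm p q x a $$ (i, if j < q then j + p else j - q))
      = GL n q a 0 C' x"
      by (rule eq_matI) (auto simp: GL_def Wm_def n_def C'_def)
    finally show ?thesis .
  qed
  have sq: "((-1::'a)^(q*p)) * (-1)^(q*p) = 1"
    by (simp add: power_add[symmetric] mult_2[symmetric])
  have "Ffun p q x a = (-1)^(p choose 2) * (-1)^(q*p) * (\<Sum>mu\<in>Pset q. sg mu * det (GR n q a 0 C' x mu))"
    unfolding s1 s2 s3 by (simp add: sum_distrib_left ac_simps)
  also have "\<dots> = (-1)^(p choose 2) * (-1)^(q choose 2) * ((-1)^(q*p) * det (GL n q a 0 C' x))"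
    unfolding s4 by (simp add: ac_simps)
  also have "\<dots> = (-1)^((p choose 2) + (q choose 2)) * det (Umat p q x a)"
    unfolding det_U_W s5 by (simp add: power_add)
  finally have F: "Ffun p q x a = (-1)^((p choose 2) + (q choose 2)) * det (Umat p q x a)" .
  show ?thesis using F U_V0[OF assms] by (simp add: mult.assoc)
qed

end
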